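(* Let $X$ be a totally ordered set of distinct elements, let $k \ge 2$ and $1\le t\le k$ with $t \ne (k+1)/2$, and consider the $(k,t)$ scale which on input any $k$-element subset of $X$ returns its $t$-th smallest element. Let $S$ be the set of the $t-1$ smallest elements of $X$ and $L$ the set of the $k-t$ largest elements of $X$. Let $z_1,\ldots,z_{k+1}$ be $k+1$ fixed elements of $X$. Then by querying all $\binom{k+1}{k}$ $k$-element subsets of $\{z_1,\ldots,z_{k+1}\}$ one can find two of them, $x$ and $y$, such that $x,y \notin S\cup L$ and one knows that $x < y$.
   Context: The condition $t \neq (k+1)/2$ means the scale is asymmetric (not invariant under reversing the order). *)

theory Defs
  imports Main "HOL-Library.FuncSet"
begin

text \<open>A total order on X is given by a strict linear order relation r on X;
  (a,b) \<in> r means a < b.\<close>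

definition scale_answer :: "('a \<times> 'a) set \<Rightarrow> nat \<Rightarrow> 'a set \<Rightarrow> 'a" where
  "scale_answer r t A = (THE a. a \<in> A \<and> card {b \<in> A. (b, a) \<in> r} = t - 1)"

definition smallest_set :: "('a \<times> 'a) set \<Rightarrow> nat \<Rightarrow> 'a set \<Rightarrow> 'a set" where
  "smallest_set r t X = {a \<in> X. card {b \<in> X. (b, a) \<in> r} < t - 1}"

definition largest_set :: "('a \<times> 'a) set \<Rightarrow> nat \<Rightarrow> nat \<Rightarrow> 'a set \<Rightarrow> 'a set" where
  "largest_set r k t X = {a \<in> X. card {b \<in> X. (a, b) \<in> r} < k - t}"

end

theory Submission
  imports Defs
begin

definition rk :: "('a \<times> 'a) set \<Rightarrow> 'a set \<Rightarrow> 'a \<Rightarrow> nat" where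
  "rk r A a = card {b \<in> A. (b, a) \<in> r}"

lemma rk_less:
  assumes "finite A" "a \<in> A" "a' \<in> A" "(a, a') \<in> r" "trans r" "irrefl r"
  shows "rk r A a < rk r A a'"
proof -
  have sub: "insert a {b \<in> A. (b, a) \<in> r} \<subseteq> {b \<in> A. (b, a') \<in> r}"
    using assms by (auto dest: transD)
  have na: "a \<notin> {b \<in> A. (b, a) \<in> r}" using assms(6) by (auto simp: irrefl_def)
  have "card (insert a {b \<in> A. (b, a) \<in> r}) \<le> card {b \<in> A. (b, a') \<in> r}"
    using sub assms(1) by (intro card_mono) auto
  moreover have "card (insert a {b \<in> A. (b, a) \<in> r}) = rk r A a + 1"
    using na assms(1) by (simp add: rk_def)
  ultimately show ?thesis by (simp add: rk_def)
qed

lemma rk_inj: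
  assumes "finite A" "trans r" "irrefl r" "total_on A r"
  shows "inj_on (rk r A) A"
proof (rule inj_onI, rule ccontr)
  fix a a' assume h: "a \<in> A" "a' \<in> A" "rk r A a = rk r A a'" "a \<noteq> a'"
  then have "(a, a') \<in> r \<or> (a', a) \<in> r" using assms(4) by (auto simp: total_on_def)
  then show False using rk_less[OF assms(1) _ _ _ assms(2,3)] h by fastforce
qed

lemma rk_bound:
  assumes "finite A" "a \<in> A" "irrefl r"
  shows "rk r A a < card A"
proof -
  have "{b \<in> A. (b, a) \<in> r} \<subset> A" using assms by (auto simp: irrefl_def)
  then show ?thesis unfolding rk_def using assms(1) by (simp add: psubset_card_mono)
qed

lemma rk_image:
  assumes "finite A" "trans r" "irrefl r" "total_on A r"
  shows "rk r A ` A = {0..<card A}"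
proof (rule card_subset_eq)
  show "finite {0..<card A}" by simp
  show "rk r A ` A \<subseteq> {0..<card A}" using rk_bound assms by fastforce
  show "card (rk r A ` A) = card {0..<card A}"
    using card_image[OF rk_inj[OF assms]] by simp
qed

lemma rk_exists:
  assumes "finite A" "trans r" "irrefl r" "total_on A r" "i < card A"
  shows "\<exists>a\<in>A. rk r A a = i"
  using rk_image[OF assms(1-4)] assms(5) by (metis atLeastLessThan_iff imageE zero_le)

lemma answer_eq:
  assumes "finite A" "trans r" "irrefl r" "total_on A r" "a \<in> A" "rk r A a = t - 1"
  shows "scale_answer r t A = a"
  unfolding scale_answer_def
proof (rule the_equality)
  show "a \<in> A \<and> card {b \<in> A. (b, a) \<in> r} = t - 1" using assms by (simp add: rk_def)
  fix a' assume "a' \<in> A \<and> card {b \<in> A. (b, a') \<in> r} = t - 1"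
  then show "a' = a" using rk_inj[OF assms(1-4)] assms(5,6)
    by (auto simp: rk_def inj_on_def)
qed

lemma above_card:
  assumes "finite A" "trans r" "irrefl r" "total_on A r" "a \<in> A"
  shows "card {b \<in> A. (a, b) \<in> r} = card A - 1 - rk r A a"
proof -
  have un: "A - {a} = {b \<in> A. (b, a) \<in> r} \<union> {b \<in> A. (a, b) \<in> r}"
    using assms by (auto simp: total_on_def irrefl_def)
  have dis: "{b \<in> A. (b, a) \<in> r} \<inter> {b \<in> A. (a, b) \<in> r} = {}"
    using assms(2,3) by (auto simp: irrefl_def dest: transD)
  have "card (A - {a}) = rk r A a + card {b \<in> A. (a, b) \<in> r}"
    unfolding un rk_def using assms(1) dis by (simp add: card_Un_disjoint)
  moreover have "card (A - {a}) = card A - 1" using assms by simp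
  ultimately show ?thesis by simp
qed

theorem lemma1:
  fixes X Z :: "'a set" and k t :: nat
  assumes "finite X" and "Z \<subseteq> X" and "card Z = k + 1"
    and "k \<ge> 2" and "1 \<le> t" and "t \<le> k" and "2 * t \<noteq> k + 1"
  shows "\<exists>f :: ('a set \<Rightarrow> 'a) \<Rightarrow> 'a \<times> 'a. \<forall>r. strict_linear_order_on X r \<longrightarrow>
    (let ans = restrict (scale_answer r t) {A. A \<subseteq> Z \<and> card A = k};
         x = fst (f ans); y = snd (f ans)
     in x \<in> Z \<and> y \<in> Z \<and>
        x \<notin> smallest_set r t X \<union> largest_set r k t X \<and>
        y \<notin> smallest_set r t X \<union> largest_set r k t X \<and>
        (x, y) \<in> r)"
proof -
  define cnt where "cnt = (\<lambda>ans v. card {w \<in> Z. ans (Z - {w}) = (v::'a)})"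
  define f where "f = (\<lambda>ans. (THE v. v \<in> Z \<and> cnt ans v = k + 1 - t,
                              THE v. v \<in> Z \<and> cnt ans v = t))"
  have fZ: "finite Z" using assms(1,2) finite_subset by blast
  show ?thesis
  proof (rule exI[of _ f], intro allI impI)
    fix r assume slo: "strict_linear_order_on X r"
    have tr: "trans r" and ir: "irrefl r" and tot: "total_on Z r"
      using slo assms(2) by (auto simp: strict_linear_order_on_def total_on_def)
    define ans where "ans = restrict (scale_answer r t) {A. A \<subseteq> Z \<and> card A = k}"
    obtain x where x: "x \<in> Z" "rk r Z x = t - 1"
      using rk_exists[OF fZ tr ir tot, of "t - 1"] assms by fastforce
    obtain y where y: "y \<in> Z" "rk r Z y = t"
      using rk_exists[OF fZ tr ir tot, of "t"] assms by fastforce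
    have xy: "(x, y) \<in> r"
    proof -
      have "x \<noteq> y" using x y assms(5) by auto
      then have "(x, y) \<in> r \<or> (y, x) \<in> r" using tot x y by (auto simp: total_on_def)
      moreover have "(y, x) \<notin> r" using rk_less[OF fZ y(1) x(1) _ tr ir] x y by auto
      ultimately show ?thesis by blast
    qed
    have xney: "x \<noteq> y" using xy ir by (auto simp: irrefl_def)
    have answ: "ans (Z - {w}) = scale_answer r t (Z - {w})" if "w \<in> Z" for w
      using that fZ assms(3) by (simp add: ans_def)
    have totw: "total_on (Z - {w}) r" for w using tot by (auto simp: total_on_def)
    have case1: "ans (Z - {w}) = x" if "w \<in> Z" "(x, w) \<in> r" for w
    proof -
      have "{b \<in> Z - {w}. (b, x) \<in> r} = {b \<in> Z. (b, x) \<in> r}"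
        using that tr ir by (auto simp: irrefl_def dest: transD)
      then have "rk r (Z - {w}) x = t - 1" using x by (simp add: rk_def)
      moreover have "x \<in> Z - {w}" using that x ir by (auto simp: irrefl_def)
      ultimately show ?thesis using answer_eq[OF _ tr ir totw] answ[OF that(1)] fZ by simp
    qed
    have case2: "ans (Z - {w}) = y" if "w \<in> Z" "w = x \<or> (w, x) \<in> r" for w
    proof -
      have wy: "(w, y) \<in> r" using that xy tr by (auto dest: transD)
      have "{b \<in> Z - {w}. (b, y) \<in> r} = {b \<in> Z. (b, y) \<in> r} - {w}" by auto
      then have "rk r (Z - {w}) y = t - 1" using y wy that(1) fZ by (simp add: rk_def)
      moreover have "y \<in> Z - {w}" using wy y ir by (auto simp: irrefl_def)
      ultimately show ?thesis using answer_eq[OF _ tr ir totw] answ[OF that(1)] fZ by simp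
    qed
    have split: "w = x \<or> (w, x) \<in> r \<or> (x, w) \<in> r" if "w \<in> Z" for w
      using tot that x by (auto simp: total_on_def)
    have cx: "{w \<in> Z. ans (Z - {w}) = x} = {w \<in> Z. (x, w) \<in> r}"
      using case1 case2 split xney by blast
    have cy: "{w \<in> Z. ans (Z - {w}) = y} = insert x {w \<in> Z. (w, x) \<in> r}"
      using case1 case2 split xney x by blast
    have cntx: "cnt ans x = k + 1 - t"
      unfolding cnt_def cx using above_card[OF fZ tr ir tot x(1)] x assms by simp
    have cnty: "cnt ans y = t"
    proof -
      have "x \<notin> {w \<in> Z. (w, x) \<in> r}" using ir by (auto simp: irrefl_def)
      then show ?thesis unfolding cnt_def cy using fZ x assms(5) by (simp add: rk_def)
    qed
    have cnto: "cnt ans v = 0" if "v \<noteq> x" "v \<noteq> y" for v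
    proof -
      have "{w \<in> Z. ans (Z - {w}) = v} = {}" using case1 case2 split that by blast
      then show ?thesis unfolding cnt_def by (simp only: card.empty)
    qed
    have fx: "fst (f ans) = x" unfolding f_def fst_conv
    proof (rule the_equality)
      show "x \<in> Z \<and> cnt ans x = k + 1 - t" using x cntx by simp
      fix v assume "v \<in> Z \<and> cnt ans v = k + 1 - t"
      then show "v = x" using cnty cnto assms by (cases "v = y") (auto, fastforce)
    qed
    have fy: "snd (f ans) = y" unfolding f_def snd_conv
    proof (rule the_equality)
      show "y \<in> Z \<and> cnt ans y = t" using y cnty by simp
      fix v assume "v \<in> Z \<and> cnt ans v = t"
      then show "v = y" using cntx cnto assms by (cases "v = x") (auto, fastforce)
    qed
    have below: "rk r Z a \<le> card {b \<in> X. (b, a) \<in> r}" for a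
      unfolding rk_def using assms(1,2) by (intro card_mono) auto
    have above: "card {b \<in> Z. (a, b) \<in> r} \<le> card {b \<in> X. (a, b) \<in> r}" for a
      using assms(1,2) by (intro card_mono) auto
    have ax: "card {b \<in> Z. (x, b) \<in> r} = k + 1 - t"
      using above_card[OF fZ tr ir tot x(1)] x assms by simp
    have ay: "card {b \<in> Z. (y, b) \<in> r} = k - t"
      using above_card[OF fZ tr ir tot y(1)] y assms by simp
    have "x \<notin> smallest_set r t X \<union> largest_set r k t X"
      using below[of x] above[of x] x ax by (auto simp: smallest_set_def largest_set_def)
    moreover have "y \<notin> smallest_set r t X \<union> largest_set r k t X"
      using below[of y] above[of y] y ay by (auto simp: smallest_set_def largest_set_def)
    ultimately show "let ans = restrict (scale_answer r t) {A. A \<subseteq> Z \<and> card A = k};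
         x = fst (f ans); y = snd (f ans)
     in x \<in> Z \<and> y \<in> Z \<and>
        x \<notin> smallest_set r t X \<union> largest_set r k t X \<and>
        y \<notin> smallest_set r t X \<union> largest_set r k t X \<and>
        (x, y) \<in> r"
      using fx fy x y xy unfolding ans_def[symmetric] Let_def by simp
  qed
qed

end
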